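(* Let $f:I\to\mathbb{R}$ and $g:J\to\mathbb{R}$ be smooth functions on open intervals $I,J\subset\mathbb{R}$, and let $S$ be the translation surface $z=f(x)+g(y)$, $(x,y)\in I\times J$. Let $\phi(x,y,z)=\alpha x+\beta y+\gamma z$ with $\alpha,\beta,\gamma\in\mathbb{R}$ not all zero. If $S$ is $\phi$-minimal, then $f$ or $g$ is an affine function (i.e. $f''\equiv0$ or $g''\equiv0$); consequently $S$ is a cylindrical surface whose rulings are parallel to the $xz$-plane or to the $yz$-plane.
   Context: For a smooth oriented surface with unit normal $N$, $H$ is the mean curvature normalized so that $\Delta_S X=2HN$. The $\phi$-mean curvature is $H_\phi=H-\tfrac12\langle N,(\alpha,\beta,\gamma)\rangle$ and $S$ is $\phi$-minimal if $H_\phi\equiv0$. For the graph $z=f(x)+g(y)$ this condition is equivalent to $(1+g'^2)f''+(1+f'^2)g''=(1+f'^2+g'^2)(-\alpha f'-\beta g'+\gamma)$. *)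

theory Defs
  imports "HOL-Analysis.Analysis"
begin

definition smooth_on :: "real set \<Rightarrow> (real \<Rightarrow> real) \<Rightarrow> bool" where
  "smooth_on I f \<longleftrightarrow> (\<forall>n. \<forall>x\<in>I. ((deriv ^^ n) f) differentiable (at x))"

definition pd_x :: "(real \<Rightarrow> real \<Rightarrow> real) \<Rightarrow> real \<Rightarrow> real \<Rightarrow> real" where
  "pd_x h x y = deriv (\<lambda>s. h s y) x"
definition pd_y :: "(real \<Rightarrow> real \<Rightarrow> real) \<Rightarrow> real \<Rightarrow> real \<Rightarrow> real" where
  "pd_y h x y = deriv (\<lambda>t. h x t) y"

definition graph_normal :: "(real \<Rightarrow> real \<Rightarrow> real) \<Rightarrow> real \<Rightarrow> real \<Rightarrow> real \<times> real \<times> real" where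
  "graph_normal h x y =
     (let W = sqrt (1 + (pd_x h x y)\<^sup>2 + (pd_y h x y)\<^sup>2)
      in (- pd_x h x y / W, - pd_y h x y / W, 1 / W))"

text \<open>Mean curvature of the graph z = h(x,y) w.r.t. the upward normal N,
  normalised so that the Laplacian of the position vector equals 2 H N.\<close>
definition graph_mean_curvature :: "(real \<Rightarrow> real \<Rightarrow> real) \<Rightarrow> real \<Rightarrow> real \<Rightarrow> real" where
  "graph_mean_curvature h x y =
     (let hx = pd_x h x y; hy = pd_y h x y;
          hxx = pd_x (pd_x h) x y; hyy = pd_y (pd_y h) x y; hxy = pd_y (pd_x h) x y;
          W = sqrt (1 + hx\<^sup>2 + hy\<^sup>2)
      in ((1 + hy\<^sup>2) * hxx - 2 * hx * hy * hxy + (1 + hx\<^sup>2) * hyy) / (2 * W ^ 3))"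

definition graph_phi_mean_curvature ::
  "real \<Rightarrow> real \<Rightarrow> real \<Rightarrow> (real \<Rightarrow> real \<Rightarrow> real) \<Rightarrow> real \<Rightarrow> real \<Rightarrow> real" where
  "graph_phi_mean_curvature \<alpha> \<beta> \<gamma> h x y =
     (case graph_normal h x y of (n1, n2, n3) \<Rightarrow>
        graph_mean_curvature h x y - (1/2) * (\<alpha> * n1 + \<beta> * n2 + \<gamma> * n3))"

definition graph_phi_minimal ::
  "real \<Rightarrow> real \<Rightarrow> real \<Rightarrow> (real \<Rightarrow> real \<Rightarrow> real) \<Rightarrow> (real \<times> real) set \<Rightarrow> bool" where
  "graph_phi_minimal \<alpha> \<beta> \<gamma> h U \<longleftrightarrow> (\<forall>(x, y)\<in>U. graph_phi_mean_curvature \<alpha> \<beta> \<gamma> h x y = 0)"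

end

theory Submission
  imports Defs "HOL-Computational_Algebra.Polynomial"
begin

lemma cubic_zero:
  fixes S :: "real set"
  assumes "infinite S" "\<forall>x\<in>S. c0 + c1*x + c2*x^2 + c3*x^3 = 0"
  shows "c0 = 0 \<and> c1 = 0 \<and> c2 = 0 \<and> c3 = 0"
proof -
  define P where "P = [:c0, c1, c2, c3:]"
  have pe: "poly P x = c0 + c1*x + c2*x^2 + c3*x^3" for x
    by (simp add: P_def algebra_simps power2_eq_square power3_eq_cube)
  have "S \<subseteq> {x. poly P x = 0}" using assms(2) pe by auto
  hence "infinite {x. poly P x = 0}" using assms(1) finite_subset by blast
  hence "P = 0" using poly_roots_finite by blast
  thus ?thesis by (simp add: P_def)
qed

lemma deriv_add_const: "deriv (\<lambda>s. f s + (c::real)) = deriv f"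
proof
  fix x
  have "(\<lambda>D. ((\<lambda>s. f s + c) has_field_derivative D) (at x)) = (\<lambda>D. (f has_field_derivative D) (at x))"
  proof
    fix D
    show "((\<lambda>s. f s + c) has_field_derivative D) (at x) = (f has_field_derivative D) (at x)"
    proof
      assume "((\<lambda>s. f s + c) has_field_derivative D) (at x)"
      from DERIV_add[OF this DERIV_const[of "-c"]] show "(f has_field_derivative D) (at x)" by simp
    next
      assume "(f has_field_derivative D) (at x)"
      from DERIV_add[OF this DERIV_const[of "c"]] show "((\<lambda>s. f s + c) has_field_derivative D) (at x)" by simp
    qed
  qed
  thus "deriv (\<lambda>s. f s + c) x = deriv f x" by (simp add: deriv_def)
qed

lemma infinite_image:
  fixes h :: "real \<Rightarrow> real"
  assumes "is_interval I" "continuous_on I h" "x1 \<in> I" "x2 \<in> I" "h x1 \<noteq> h x2"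
  shows "infinite (h ` I)"
proof
  assume fin: "finite (h ` I)"
  have "connected (h ` I)"
    using connected_continuous_image[OF assms(2)] assms(1) is_interval_connected by blast
  with fin connected_finite_iff_sing obtain a where "h ` I = {} \<or> h ` I = {a}" by blast
  thus False using assms(3-5) by (metis empty_iff image_eqI singletonD)
qed

lemma affine_or_nonconst:
  fixes f :: "real \<Rightarrow> real"
  assumes "open I" "is_interval I" "I \<noteq> {}" "smooth_on I f"
  shows "(\<exists>a b. \<forall>x\<in>I. f x = a * x + b) \<or> infinite (deriv f ` I)"
proof (cases "\<exists>x1\<in>I. \<exists>x2\<in>I. deriv f x1 \<noteq> deriv f x2")
  case True
  then obtain x1 x2 where x: "x1 \<in> I" "x2 \<in> I" "deriv f x1 \<noteq> deriv f x2" by blast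
  have "\<forall>x\<in>I. isCont (deriv f) x"
  proof
    fix x assume "x \<in> I"
    hence "((deriv ^^ 1) f) differentiable (at x)" using assms(4) unfolding smooth_on_def by blast
    thus "isCont (deriv f) x" by (simp add: differentiable_imp_continuous_within)
  qed
  hence "continuous_on I (deriv f)" by (simp add: continuous_at_imp_continuous_on)
  thus ?thesis using infinite_image[OF assms(2) _ x] by blast
next
  case False
  then obtain x0 where "x0 \<in> I" using assms(3) by blast
  with False have k: "\<forall>x\<in>I. deriv f x = deriv f x0" by blast
  define k0 where "k0 = deriv f x0"
  have d: "\<forall>x\<in>I. DERIV f x :> deriv f x"
    using assms(4) unfolding smooth_on_def
    by (metis DERIV_deriv_iff_real_differentiable funpow_0)
  have "\<forall>x\<in>I - {}. DERIV (\<lambda>x. f x - k0 * x) x :> 0"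
  proof
    fix x assume "x \<in> I - {}"
    hence "DERIV f x :> k0" using d k k0_def by auto
    from DERIV_diff[OF this DERIV_cmult_Id[of k0]] show "DERIV (\<lambda>x. f x - k0 * x) x :> 0" by simp
  qed
  moreover have "continuous_on I (\<lambda>x. f x - k0 * x)"
  proof -
    have "continuous_on I f" using d by (meson DERIV_isCont continuous_at_imp_continuous_on)
    thus ?thesis by (intro continuous_intros)
  qed
  ultimately obtain c where "\<And>x. x \<in> I \<Longrightarrow> f x - k0 * x = c"
    using DERIV_zero_connected_constant[of I "{}" "\<lambda>x. f x - k0 * x"] assms(1,2) is_interval_connected
    by blast
  hence "\<forall>x\<in>I. f x = k0 * x + c" by (metis diff_eq_eq add.commute)
  thus ?thesis by blast
qed

theorem theorem4:
  fixes f g :: "real \<Rightarrow> real" and I J :: "real set" and \<alpha> \<beta> \<gamma> :: real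
  assumes "open I" "is_interval I" "I \<noteq> {}"
    and "open J" "is_interval J" "J \<noteq> {}"
    and "smooth_on I f" "smooth_on J g"
    and "(\<alpha>, \<beta>, \<gamma>) \<noteq> (0, 0, 0)"
    and "graph_phi_minimal \<alpha> \<beta> \<gamma> (\<lambda>x y. f x + g y) (I \<times> J)"
  shows "(\<exists>a b. \<forall>x\<in>I. f x = a * x + b) \<or> (\<exists>a b. \<forall>y\<in>J. g y = a * y + b)"
proof (rule ccontr)
  assume na: "\<not> ?thesis"
  have SP: "infinite (deriv f ` I)" using affine_or_nonconst[OF assms(1-3,7)] na by blast
  have SQ: "infinite (deriv g ` J)" using affine_or_nonconst[OF assms(4-6,8)] na by blast
  define h where "h = (\<lambda>x y. f x + g y)"
  have hx: "pd_x h = (\<lambda>x y. deriv f x)"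
    by (intro ext) (simp add: pd_x_def h_def deriv_add_const)
  have hy: "pd_y h = (\<lambda>x y. deriv g y)"
    by (intro ext) (simp add: pd_y_def h_def deriv_add_const[of g, simplified add.commute] add.commute)
  have K: "(1 + (deriv g y)^2) * deriv (deriv f) x + (1 + (deriv f x)^2) * deriv (deriv g) y
        = (1 + (deriv f x)^2 + (deriv g y)^2) * (\<gamma> - \<alpha> * deriv f x - \<beta> * deriv g y)"
    if "x \<in> I" "y \<in> J" for x y
  proof -
    define p q a b where "p = deriv f x" "q = deriv g y" "a = deriv (deriv f) x" "b = deriv (deriv g) y"
    define W where "W = sqrt (1 + p^2 + q^2)"
    have Wp: "W > 0" unfolding W_def by (simp add: add_pos_nonneg)
    have W2: "W^2 = 1 + p^2 + q^2" unfolding W_def by (simp add: add_nonneg_nonneg)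
    have "graph_phi_mean_curvature \<alpha> \<beta> \<gamma> h x y = 0"
      using assms(10) that unfolding graph_phi_minimal_def h_def by auto
    hence "((1 + q^2) * a + (1 + p^2) * b) / (2 * W ^ 3)
           - (1/2) * (\<alpha> * (- p / W) + \<beta> * (- q / W) + \<gamma> * (1 / W)) = 0"
      unfolding graph_phi_mean_curvature_def graph_normal_def graph_mean_curvature_def
      by (simp add: hx hy p_q_a_b_def W_def Let_def pd_x_def pd_y_def)
    hence "((1 + q^2) * a + (1 + p^2) * b) / (2 * W ^ 3)
           = (1/2) * (\<alpha> * (- p / W) + \<beta> * (- q / W) + \<gamma> * (1 / W))" by simp
    hence "((1 + q^2) * a + (1 + p^2) * b) = (1/2) * (\<alpha> * (- p / W) + \<beta> * (- q / W) + \<gamma> * (1 / W)) * (2 * W ^ 3)"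
      using Wp by (subst (asm) nonzero_divide_eq_eq) auto
    also have "\<dots> = W^2 * (\<gamma> - \<alpha> * p - \<beta> * q)"
      using Wp by (simp add: field_simps power2_eq_square power3_eq_cube)
    finally have "(1 + q^2) * a + (1 + p^2) * b = W^2 * (\<gamma> - \<alpha> * p - \<beta> * q)" .
    thus ?thesis using W2 by (simp add: p_q_a_b_def)
  qed
  obtain y1 y2 where y: "y1 \<in> J" "y2 \<in> J" "(deriv g y1)^2 \<noteq> (deriv g y2)^2"
  proof -
    obtain y1 where y1: "y1 \<in> J" using assms(6) by blast
    have "\<exists>y2\<in>J. (deriv g y1)^2 \<noteq> (deriv g y2)^2"
    proof (rule ccontr)
      assume "\<not> ?thesis"
      hence "deriv g ` J \<subseteq> {deriv g y1, - deriv g y1}"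
        by (auto simp: power2_eq_iff)
      thus False using SQ finite_subset by blast
    qed
    thus ?thesis using that y1 by blast
  qed
  define q1 q2 b1 b2 where "q1 = deriv g y1" "q2 = deriv g y2"
    "b1 = deriv (deriv g) y1" "b2 = deriv (deriv g) y2"
  define d where "d = q1^2 - q2^2"
  have dnz: "d \<noteq> 0" using y by (simp add: d_def q1_q2_b1_b2_def)
  define U where "U = ((1 + q1^2) * (\<gamma> - \<beta> * q1) - (1 + q2^2) * (\<gamma> - \<beta> * q2) - (b1 - b2)) / d"
  define Wc where "Wc = (- \<beta> * (q1 - q2) - (b1 - b2)) / d"
  have A: "deriv (deriv f) x = U - \<alpha> * deriv f x + Wc * (deriv f x)^2" if "x \<in> I" for x
  proof -
    define p a where "p = deriv f x" "a = deriv (deriv f) x"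
    have e1: "(1 + q1^2) * a + (1 + p^2) * b1 = (1 + p^2 + q1^2) * (\<gamma> - \<alpha> * p - \<beta> * q1)"
      using K[OF that y(1)] by (simp add: p_a_def q1_q2_b1_b2_def)
    have e2: "(1 + q2^2) * a + (1 + p^2) * b2 = (1 + p^2 + q2^2) * (\<gamma> - \<alpha> * p - \<beta> * q2)"
      using K[OF that y(2)] by (simp add: p_a_def q1_q2_b1_b2_def)
    have Ud: "U * d = (1 + q1^2) * (\<gamma> - \<beta> * q1) - (1 + q2^2) * (\<gamma> - \<beta> * q2) - (b1 - b2)"
      unfolding U_def using dnz by simp
    have Wd: "Wc * d = - \<beta> * (q1 - q2) - (b1 - b2)"
      unfolding Wc_def using dnz by simp
    have "((1 + q1^2) * a + (1 + p^2) * b1) - ((1 + q2^2) * a + (1 + p^2) * b2)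
        = (1 + p^2 + q1^2) * (\<gamma> - \<alpha> * p - \<beta> * q1) - (1 + p^2 + q2^2) * (\<gamma> - \<alpha> * p - \<beta> * q2)"
      using e1 e2 by simp
    hence "a * d = (1 + p^2 + q1^2) * (\<gamma> - \<alpha> * p - \<beta> * q1) - (1 + p^2 + q2^2) * (\<gamma> - \<alpha> * p - \<beta> * q2) - (1 + p^2) * (b1 - b2)"
      unfolding d_def by (simp add: algebra_simps)
    also have "\<dots> = ((1 + q1^2) * (\<gamma> - \<beta> * q1) - (1 + q2^2) * (\<gamma> - \<beta> * q2) - (b1 - b2))
          - \<alpha> * p * d + (- \<beta> * (q1 - q2) - (b1 - b2)) * p^2"
      unfolding d_def by (simp add: algebra_simps power2_eq_square)
    also have "\<dots> = U * d - \<alpha> * p * d + (Wc * d) * p^2"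
      by (simp only: Ud Wd)
    finally have "a * d = (U - \<alpha> * p + Wc * p^2) * d" by (simp add: algebra_simps)
    thus ?thesis using dnz by (simp add: p_a_def)
  qed
  have C: "\<alpha> = 0 \<and> (1 + (deriv g y)^2) * Wc + deriv (deriv g) y - (\<gamma> - \<beta> * deriv g y) = 0
        \<and> (1 + (deriv g y)^2) * U + deriv (deriv g) y - (1 + (deriv g y)^2) * (\<gamma> - \<beta> * deriv g y) = 0"
    if yJ: "y \<in> J" for y
  proof -
    define q b where "q = deriv g y" "b = deriv (deriv g) y"
    have "\<forall>p\<in>deriv f ` I. ((1 + q^2) * U + b - (1 + q^2) * (\<gamma> - \<beta> * q)) + 0 * p
        + ((1 + q^2) * Wc + b - (\<gamma> - \<beta> * q)) * p^2 + \<alpha> * p^3 = 0"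
    proof
      fix p assume "p \<in> deriv f ` I"
      then obtain x where x: "x \<in> I" "p = deriv f x" by blast
      have "(1 + q^2) * (U - \<alpha> * p + Wc * p^2) + (1 + p^2) * b = (1 + p^2 + q^2) * (\<gamma> - \<alpha> * p - \<beta> * q)"
        using K[OF x(1) yJ] A[OF x(1)] x(2) by (simp add: q_b_def)
      thus "((1 + q^2) * U + b - (1 + q^2) * (\<gamma> - \<beta> * q)) + 0 * p
        + ((1 + q^2) * Wc + b - (\<gamma> - \<beta> * q)) * p^2 + \<alpha> * p^3 = 0"
        by (simp add: algebra_simps power2_eq_square power3_eq_cube)
    qed
    from cubic_zero[OF SP this] show ?thesis by (simp add: q_b_def)
  qed
  have "\<forall>q\<in>deriv g ` J. (U - Wc) + 0 * q + (U - Wc - \<gamma>) * q^2 + \<beta> * q^3 = 0"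
  proof
    fix q assume "q \<in> deriv g ` J"
    then obtain y where yy: "y \<in> J" "q = deriv g y" by blast
    from C[OF yy(1)] yy(2) have
      e2: "(1 + q^2) * Wc + deriv (deriv g) y - (\<gamma> - \<beta> * q) = 0" and
      e0: "(1 + q^2) * U + deriv (deriv g) y - (1 + q^2) * (\<gamma> - \<beta> * q) = 0" by auto
    from e0 e2 have "(1 + q^2) * (U - Wc) - q^2 * (\<gamma> - \<beta> * q) = 0" by (simp add: algebra_simps)
    thus "(U - Wc) + 0 * q + (U - Wc - \<gamma>) * q^2 + \<beta> * q^3 = 0"
      by (simp add: algebra_simps power2_eq_square power3_eq_cube)
  qed
  from cubic_zero[OF SQ this] have "\<beta> = 0" "\<gamma> = 0" by auto
  moreover have "\<alpha> = 0" using C y(1) by blast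
  ultimately show False using assms(9) by simp
qed

end
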